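(* There is an absolute constant $C$ such that for all real $x\ge2$ and $y\ge3$, $$\pi(x+y)-\pi(x)\le\frac{2y}{\log y}+C\,\frac{y\log\log y}{(\log y)^2}.$$
   Context: $\pi(t)$ denotes the number of primes $\le t$. *)

theory Defs
  imports "HOL-Analysis.Analysis" "HOL-Computational_Algebra.Primes"
begin

definition primepi :: "real \<Rightarrow> nat" where
  "primepi t = card {p :: nat. prime p \<and> real p \<le> t}"

end

theory Submission
  imports Defs "HOL-Library.FuncSet" "HOL-Real_Asymp.Real_Asymp"
begin


definition PS :: "real \<Rightarrow> nat set" where "PS z = {p. prime p \<and> real p \<le> z}"
definition pr :: "nat set \<Rightarrow> nat" where "pr S = (\<Prod>p\<in>S. p)"
definition DS :: "real \<Rightarrow> nat set set" where "DS z = {S. S \<subseteq> PS z \<and> real (pr S) \<le> z}"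
definition hh :: "nat set \<Rightarrow> real" where "hh S = (\<Prod>p\<in>S. 1 / (real p - 1))"
definition ph :: "nat set \<Rightarrow> real" where "ph S = (\<Prod>p\<in>S. real p - 1)"
definition GG :: "real \<Rightarrow> real" where "GG z = (\<Sum>S\<in>DS z. hh S)"
definition lam :: "real \<Rightarrow> nat set \<Rightarrow> real" where
 "lam z S = (-1)^card S * real (pr S) / GG z * (\<Sum>T\<in>{T\<in>DS z. S \<subseteq> T}. hh T)"

lemma PS_sub: "PS z \<subseteq> {1..nat \<lfloor>z\<rfloor>}"
proof
  fix p assume "p \<in> PS z"
  then have "prime p" "real p \<le> z" by (auto simp: PS_def)
  then show "p \<in> {1..nat \<lfloor>z\<rfloor>}"
    using prime_ge_1_nat le_nat_floor by (auto simp: le_nat_floor)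
qed

lemma finite_PS: "finite (PS z)"
  using PS_sub finite_subset by blast

lemma card_PS: "real (card (PS z)) \<le> max 0 z"
proof -
  have "card (PS z) \<le> card {1..nat \<lfloor>z\<rfloor>}" by (rule card_mono[OF _ PS_sub]) auto
  then have "card (PS z) \<le> nat \<lfloor>z\<rfloor>" by simp
  then show ?thesis by linarith
qed

lemma finite_DS: "finite (DS z)"
  by (rule finite_subset[of _ "Pow (PS z)"]) (auto simp: DS_def finite_PS)

lemma DS_fin: "S \<in> DS z \<Longrightarrow> finite S"
  using finite_PS by (auto simp: DS_def intro: finite_subset)

lemma DS_primes: "S \<in> DS z \<Longrightarrow> p \<in> S \<Longrightarrow> prime p"
  by (auto simp: DS_def PS_def)

lemma pr_pos: "(\<And>p. p \<in> S \<Longrightarrow> prime p) \<Longrightarrow> pr S > 0"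
  unfolding pr_def by (rule prod_pos) (auto intro: prime_gt_0_nat)

lemma pr_mono: "finite T \<Longrightarrow> S \<subseteq> T \<Longrightarrow> (\<And>p. p \<in> T \<Longrightarrow> prime p) \<Longrightarrow> pr S \<le> pr T"
  unfolding pr_def
  by (rule dvd_imp_le[OF prod_dvd_prod_subset]) (auto intro: pr_pos[unfolded pr_def] prime_gt_0_nat)

lemma DS_down: "T \<in> DS z \<Longrightarrow> S \<subseteq> T \<Longrightarrow> S \<in> DS z"
proof -
  assume T: "T \<in> DS z" and ST: "S \<subseteq> T"
  have "pr S \<le> pr T" using pr_mono[OF DS_fin[OF T] ST] DS_primes[OF T] by blast
  then show "S \<in> DS z" using T ST by (auto simp: DS_def)
qed

lemma empty_DS: "z \<ge> 1 \<Longrightarrow> {} \<in> DS z"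
  by (auto simp: DS_def pr_def)

lemma pr_dvd_iff:
  assumes "finite S" "\<And>p. p \<in> S \<Longrightarrow> prime p"
  shows "pr S dvd n \<longleftrightarrow> (\<forall>p\<in>S. p dvd n)"
  using assms
proof (induction S rule: finite_induct)
  case empty then show ?case by (simp add: pr_def)
next
  case (insert q S)
  have pq: "pr (insert q S) = q * pr S" using insert by (simp add: pr_def)
  have cop: "coprime q (pr S)" unfolding pr_def
  proof (rule prod_coprime_right)
    fix i assume i: "i \<in> S"
    then have "prime i" "q \<noteq> i" "prime q" using insert.hyps insert.prems by auto
    then show "coprime q i" using primes_coprime by blast
  qed
  have primesS: "\<And>p. p \<in> S \<Longrightarrow> prime p" using insert.prems by simp
  note IH = insert.IH[OF primesS]
  show ?case
  proof
    assume "pr (insert q S) dvd n"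
    then have qS: "q * pr S dvd n" using pq by simp
    have "q dvd n" using dvd_mult_left[OF qS] .
    moreover have "pr S dvd n" using dvd_mult_right[OF qS] .
    ultimately have "q dvd n" "pr S dvd n" by auto
    then show "\<forall>p\<in>insert q S. p dvd n" using IH by simp
  next
    assume "\<forall>p\<in>insert q S. p dvd n"
    then have "q dvd n" "pr S dvd n" using IH by simp_all
    then show "pr (insert q S) dvd n" using pq cop by (simp add: divides_mult)
  qed
qed

lemma prime_dvd_pr:
  assumes "finite S" "\<And>p. p \<in> S \<Longrightarrow> prime p" "prime q"
  shows "q dvd pr S \<longleftrightarrow> q \<in> S"
proof
  assume "q dvd pr S"
  then have "\<exists>p\<in>S. q dvd p"
    using prime_dvd_prod_iff[of S q "\<lambda>p. p", OF assms(1) assms(3)] unfolding pr_def by simp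
  then obtain p where p: "p \<in> S" "q dvd p" by blast
  have "prime p" using assms(2) p(1) by blast
  then have "q = p" using primes_dvd_imp_eq[of q p] assms(3) p(2) by blast
  then show "q \<in> S" using p(1) by simp
next
  assume "q \<in> S" then show "q dvd pr S" unfolding pr_def using dvd_prodI[OF assms(1), of q "\<lambda>p. p"] by simp
qed

lemma DS_mem_iff: assumes "S \<in> DS z" "prime p" shows "p \<in> S \<longleftrightarrow> p dvd pr S"
  using prime_dvd_pr[of S p, OF DS_fin[OF assms(1)] DS_primes[OF assms(1)] assms(2)] by simp

lemma pr_inj: "inj_on pr (DS z)"
proof
  fix S T assume S: "S \<in> DS z" and T: "T \<in> DS z" and e: "pr S = pr T"
  show "S = T"
  proof (intro set_eqI iffI)
    fix p assume p: "p \<in> S"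
    then have "prime p" using DS_primes[OF S] by blast
    then show "p \<in> T" using DS_mem_iff[OF S] DS_mem_iff[OF T] e p by simp
  next
    fix p assume p: "p \<in> T"
    then have "prime p" using DS_primes[OF T] by blast
    then show "p \<in> S" using DS_mem_iff[OF S] DS_mem_iff[OF T] e p by simp
  qed
qed

lemma card_DS: "real (card (DS z)) \<le> max 0 z"
proof -
  have "pr ` DS z \<subseteq> {1..nat \<lfloor>z\<rfloor>}"
  proof
    fix m assume "m \<in> pr ` DS z"
    then obtain S where S: "S \<in> DS z" "m = pr S" by auto
    then have "m > 0" using pr_pos DS_primes by blast
    moreover have "real m \<le> z" using S by (auto simp: DS_def)
    ultimately show "m \<in> {1..nat \<lfloor>z\<rfloor>}" by (auto simp: le_nat_floor)
  qed
  then have "card (pr ` DS z) \<le> nat \<lfloor>z\<rfloor>" using card_mono[of "{1..nat \<lfloor>z\<rfloor>}" "pr ` DS z"] by simp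
  then have "card (DS z) \<le> nat \<lfloor>z\<rfloor>" using card_image[OF pr_inj] by simp
  then show ?thesis by linarith
qed




lemma hh_ph: "finite S \<Longrightarrow> (\<And>p. p \<in> S \<Longrightarrow> prime p) \<Longrightarrow> hh S * ph S = 1"
proof -
  assume f: "finite S" and pS: "\<And>p. p \<in> S \<Longrightarrow> prime p"
  have "hh S * ph S = (\<Prod>p\<in>S. 1 / (real p - 1) * (real p - 1))"
    unfolding hh_def ph_def by (rule prod.distrib[symmetric])
  also have "\<dots> = (\<Prod>p\<in>S. 1)"
  proof (rule prod.cong)
    fix p assume "p \<in> S"
    then have "prime p" by (rule pS)
    then have "real p \<ge> 2" using prime_ge_2_nat by simp
    then show "1 / (real p - 1) * (real p - 1) = 1" by simp
  qed simp
  finally show ?thesis by simp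
qed

lemma hh_nonneg: "(\<And>p. p \<in> S \<Longrightarrow> prime p) \<Longrightarrow> hh S \<ge> 0"
  unfolding hh_def
proof (rule prod_nonneg)
  fix p assume "(\<And>p. p \<in> S \<Longrightarrow> prime p)" "p \<in> S"
  then have "prime p" by blast
  then have "real p \<ge> 2" using prime_ge_2_nat by simp
  then show "1 / (real p - 1) \<ge> 0" by simp
qed

lemma pr_expand: "finite S \<Longrightarrow> real (pr S) = (\<Sum>T\<in>Pow S. ph T)"
proof -
  assume f: "finite S"
  have "real (pr S) = (\<Prod>p\<in>S. (real p - 1) + 1)" unfolding pr_def by simp
  also have "\<dots> = (\<Sum>X\<in>Pow S. (\<Prod>p\<in>X. real p - 1) * (\<Prod>p\<in>S - X. 1))"
    by (rule prod_add[OF f])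
  also have "\<dots> = (\<Sum>T\<in>Pow S. ph T)" unfolding ph_def by simp
  finally show ?thesis .
qed

lemma pr_union_inter: "finite A \<Longrightarrow> finite B \<Longrightarrow>
   real (pr (A \<union> B)) * real (pr (A \<inter> B)) = real (pr A) * real (pr B)"
  unfolding pr_def using prod.union_inter[of A B "\<lambda>p. real p"] by simp

lemma alt_sum:
  assumes "finite R" "T \<subseteq> R"
  shows "(\<Sum>S\<in>{S. T \<subseteq> S \<and> S \<subseteq> R}. (-1::real)^card S) = (if R = T then (-1)^card T else 0)"
proof -
  have fT: "finite T" using assms finite_subset by blast
  have inj: "inj_on (\<lambda>X. T \<union> X) (Pow (R - T))"
    by (rule inj_onI) auto
  have img: "(\<lambda>X. T \<union> X) ` Pow (R - T) = {S. T \<subseteq> S \<and> S \<subseteq> R}"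
  proof (intro set_eqI iffI)
    fix S assume "S \<in> (\<lambda>X. T \<union> X) ` Pow (R - T)"
    then show "S \<in> {S. T \<subseteq> S \<and> S \<subseteq> R}" using assms(2) by auto
  next
    fix S assume S: "S \<in> {S. T \<subseteq> S \<and> S \<subseteq> R}"
    then have "S = T \<union> (S - T)" "S - T \<in> Pow (R - T)" by auto
    then show "S \<in> (\<lambda>X. T \<union> X) ` Pow (R - T)" by blast
  qed
  have "(\<Sum>S\<in>{S. T \<subseteq> S \<and> S \<subseteq> R}. (-1::real)^card S)
      = (\<Sum>X\<in>Pow (R - T). (-1::real)^card (T \<union> X))"
    using sum.reindex[OF inj, of "\<lambda>S. (-1::real)^card S"] img by simp
  also have "\<dots> = (\<Sum>X\<in>Pow (R - T). (-1)^card T * (-1::real)^card X)"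
  proof (rule sum.cong)
    fix X assume X: "X \<in> Pow (R - T)"
    then have "finite X" using assms(1) finite_subset by blast
    moreover have "T \<inter> X = {}" using X by auto
    ultimately have "card (T \<union> X) = card T + card X" using fT card_Un_disjoint by blast
    then show "(-1::real)^card (T \<union> X) = (-1)^card T * (-1)^card X" by (simp add: power_add)
  qed simp
  also have "\<dots> = (-1)^card T * (\<Sum>X\<in>Pow (R - T). (\<Prod>p\<in>X. (-1::real)) * (\<Prod>p\<in>(R - T) - X. 1))"
    by (simp add: sum_distrib_left)
  also have "(\<Sum>X\<in>Pow (R - T). (\<Prod>p\<in>X. (-1::real)) * (\<Prod>p\<in>(R - T) - X. 1)) = (\<Prod>p\<in>R - T. (-1::real) + 1)"
    using prod_add[of "R - T" "\<lambda>p. -1::real" "\<lambda>p. 1"] assms(1) by simp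
  also have "(\<Prod>p\<in>R - T. (-1::real) + 1) = (if R = T then 1 else 0)"
  proof (cases "R = T")
    case True then show ?thesis by simp
  next
    case False
    then obtain p where "p \<in> R - T" using assms(2) by blast
    then show ?thesis using False assms(1) by (auto simp: card_gt_0_iff)
  qed
  finally show ?thesis by simp
qed




lemma DS_sub_primes: "S \<in> DS z \<Longrightarrow> (\<And>p. p \<in> S \<Longrightarrow> prime p)"
  using DS_primes by blast

lemma hh_nonneg_DS: assumes "S \<in> DS z" shows "hh S \<ge> 0"
  by (rule hh_nonneg) (rule DS_primes[OF assms])

lemma G_ge1: assumes "z \<ge> 1" shows "GG z \<ge> 1"
proof -
  have "hh {} \<le> (\<Sum>S\<in>DS z. hh S)"
    by (rule member_le_sum[OF empty_DS[OF assms] _ finite_DS]) (auto intro: hh_nonneg_DS)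
  then show ?thesis unfolding GG_def hh_def by simp
qed

lemma pr_real_pos: "S \<in> DS z \<Longrightarrow> real (pr S) > 0"
  using pr_pos[OF DS_sub_primes] by simp

lemma filt: "finite A \<Longrightarrow> (\<Sum>x\<in>{x\<in>A. P x}. f x) = (\<Sum>x\<in>A. if P x then f x else 0)"
  by (rule sum.inter_filter)

lemma u_identity:
  assumes z: "z \<ge> 1" and T: "T \<in> DS z"
  shows "(\<Sum>S\<in>DS z. if T \<subseteq> S then lam z S / real (pr S) else 0) = (-1)^card T * hh T / GG z"
proof -
  define D where "D = DS z"
  define G where "G = GG z"
  have fD: "finite D" unfolding D_def by (rule finite_DS)
  have G0: "G > 0" using G_ge1[OF z] unfolding G_def by simp
  have step1: "(if T \<subseteq> S then lam z S / real (pr S) else 0)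
      = (\<Sum>R\<in>D. if T \<subseteq> S \<and> S \<subseteq> R then (-1)^card S * hh R / G else 0)" if S: "S \<in> D" for S
  proof -
    have p: "real (pr S) > 0" using pr_real_pos S unfolding D_def by blast
    have "lam z S / real (pr S) = (-1)^card S / G * (\<Sum>R\<in>{R\<in>D. S \<subseteq> R}. hh R)"
      unfolding lam_def D_def G_def using p by simp
    also have "\<dots> = (-1)^card S / G * (\<Sum>R\<in>D. if S \<subseteq> R then hh R else 0)"
      using filt[OF fD, where P="\<lambda>R. S \<subseteq> R" and f=hh] by simp
    also have "\<dots> = (\<Sum>R\<in>D. if S \<subseteq> R then (-1)^card S * hh R / G else 0)"
      unfolding sum_distrib_left by (rule sum.cong) auto
    finally show ?thesis by (cases "T \<subseteq> S") simp_all
  qed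
  have "(\<Sum>S\<in>D. if T \<subseteq> S then lam z S / real (pr S) else 0)
      = (\<Sum>S\<in>D. \<Sum>R\<in>D. if T \<subseteq> S \<and> S \<subseteq> R then (-1)^card S * hh R / G else 0)"
    using step1 by (rule sum.cong[OF refl])
  also have "\<dots> = (\<Sum>R\<in>D. \<Sum>S\<in>D. if T \<subseteq> S \<and> S \<subseteq> R then (-1)^card S * hh R / G else 0)"
    by (rule sum.swap)
  also have "\<dots> = (\<Sum>R\<in>D. if R = T then (-1)^card T * hh T / G else 0)"
  proof (rule sum.cong[OF refl])
    fix R assume R: "R \<in> D"
    have fR: "finite R" using DS_fin R unfolding D_def by blast
    show "(\<Sum>S\<in>D. if T \<subseteq> S \<and> S \<subseteq> R then (-1)^card S * hh R / G else 0)
       = (if R = T then (-1)^card T * hh T / G else 0)"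
    proof (cases "T \<subseteq> R")
      case False
      then have n: "\<And>S. \<not> (T \<subseteq> S \<and> S \<subseteq> R)" by blast
      have RT: "R \<noteq> T" using False by blast
      have "(\<Sum>S\<in>D. if T \<subseteq> S \<and> S \<subseteq> R then (-1)^card S * hh R / G else 0) = (\<Sum>S\<in>D. 0)"
        by (rule sum.cong[OF refl]) (simp only: n if_False)
      then show ?thesis using RT by simp
    next
      case True
      have set: "{S\<in>D. T \<subseteq> S \<and> S \<subseteq> R} = {S. T \<subseteq> S \<and> S \<subseteq> R}"
        using DS_down R unfolding D_def by blast
      have "(\<Sum>S\<in>D. if T \<subseteq> S \<and> S \<subseteq> R then (-1)^card S * hh R / G else 0)
          = (\<Sum>S\<in>{S\<in>D. T \<subseteq> S \<and> S \<subseteq> R}. (-1)^card S * hh R / G)"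
        using filt[OF fD, where P="\<lambda>S. T \<subseteq> S \<and> S \<subseteq> R" and f="\<lambda>S. (-1)^card S * hh R / G"] by simp
      also have "\<dots> = hh R / G * (\<Sum>S\<in>{S. T \<subseteq> S \<and> S \<subseteq> R}. (-1::real)^card S)"
        unfolding set by (simp add: sum_distrib_left mult.commute)
      also have "\<dots> = hh R / G * (if R = T then (-1)^card T else 0)"
        using alt_sum[OF fR True] by simp
      finally show ?thesis by simp
    qed
  qed
  also have "\<dots> = (-1)^card T * hh T / G"
    using T fD unfolding D_def by (simp add: sum.delta')
  finally show ?thesis unfolding D_def G_def .
qed




lemma Q_identity:
  assumes z: "z \<ge> 1"
  shows "(\<Sum>A\<in>DS z. \<Sum>B\<in>DS z. lam z A * lam z B / real (pr (A \<union> B))) = 1 / GG z"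
proof -
  define D where "D = DS z"
  define G where "G = GG z"
  define a where "a A = lam z A / real (pr A)" for A
  define u where "u T = (\<Sum>A\<in>D. if T \<subseteq> A then a A else 0)" for T
  have fD: "finite D" unfolding D_def by (rule finite_DS)
  have G0: "G > 0" using G_ge1[OF z] unfolding G_def by simp
  have uT: "u T = (-1)^card T * hh T / G" if "T \<in> D" for T
    using u_identity[OF z, of T] that unfolding u_def a_def D_def G_def by simp
  have step1: "lam z A * lam z B / real (pr (A \<union> B))
     = (\<Sum>T\<in>D. if T \<subseteq> A \<and> T \<subseteq> B then ph T * a A * a B else 0)"
    if A: "A \<in> D" and B: "B \<in> D" for A B
  proof -
    have fA: "finite A" and fB: "finite B" using A B DS_fin unfolding D_def by blast+
    have pA: "real (pr A) > 0" and pB: "real (pr B) > 0"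
      using A B pr_real_pos unfolding D_def by blast+
    have "\<And>p. p \<in> A \<union> B \<Longrightarrow> prime p" using DS_primes A B unfolding D_def by blast
    then have "pr (A \<union> B) > 0" by (rule pr_pos)
    then have pU: "real (pr (A \<union> B)) > 0" by simp
    have "real (pr (A \<inter> B)) = (\<Sum>T\<in>Pow (A \<inter> B). ph T)"
      using fA by (intro pr_expand) simp
    also have "Pow (A \<inter> B) = {T\<in>D. T \<subseteq> A \<and> T \<subseteq> B}"
      using A DS_down unfolding D_def by blast
    also have "(\<Sum>T\<in>{T\<in>D. T \<subseteq> A \<and> T \<subseteq> B}. ph T) = (\<Sum>T\<in>D. if T \<subseteq> A \<and> T \<subseteq> B then ph T else 0)"
      by (rule filt[OF fD])
    finally have e1: "real (pr (A \<inter> B)) = (\<Sum>T\<in>D. if T \<subseteq> A \<and> T \<subseteq> B then ph T else 0)" .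
    have e2: "1 / real (pr (A \<union> B)) = real (pr (A \<inter> B)) / (real (pr A) * real (pr B))"
      using pr_union_inter[OF fA fB] pA pB pU by (simp add: field_simps)
    have "lam z A * lam z B / real (pr (A \<union> B)) = lam z A * lam z B * (1 / real (pr (A \<union> B)))"
      by simp
    also have "\<dots> = lam z A * lam z B * (real (pr (A \<inter> B)) / (real (pr A) * real (pr B)))"
      by (simp only: e2)
    also have "\<dots> = a A * a B * real (pr (A \<inter> B))"
      using pA pB unfolding a_def by (simp add: field_simps)
    also have "\<dots> = (\<Sum>T\<in>D. if T \<subseteq> A \<and> T \<subseteq> B then ph T * a A * a B else 0)"
      unfolding e1 sum_distrib_left by (rule sum.cong) auto
    finally show ?thesis .
  qed
  have "(\<Sum>A\<in>D. \<Sum>B\<in>D. lam z A * lam z B / real (pr (A \<union> B)))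
     = (\<Sum>A\<in>D. \<Sum>B\<in>D. \<Sum>T\<in>D. if T \<subseteq> A \<and> T \<subseteq> B then ph T * a A * a B else 0)"
    using step1 by (intro sum.cong[OF refl]) simp
  also have "\<dots> = (\<Sum>A\<in>D. \<Sum>T\<in>D. \<Sum>B\<in>D. if T \<subseteq> A \<and> T \<subseteq> B then ph T * a A * a B else 0)"
    by (rule sum.cong[OF refl]) (rule sum.swap)
  also have "\<dots> = (\<Sum>T\<in>D. \<Sum>A\<in>D. \<Sum>B\<in>D. if T \<subseteq> A \<and> T \<subseteq> B then ph T * a A * a B else 0)"
    by (rule sum.swap)
  also have "\<dots> = (\<Sum>T\<in>D. ph T * u T * u T)"
  proof (rule sum.cong[OF refl])
    fix T assume T: "T \<in> D"
    have "ph T * u T * u T = ph T * (\<Sum>A\<in>D. \<Sum>B\<in>D. (if T \<subseteq> A then a A else 0) * (if T \<subseteq> B then a B else 0))"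
      unfolding u_def by (simp add: sum_product mult.assoc)
    also have "\<dots> = (\<Sum>A\<in>D. \<Sum>B\<in>D. if T \<subseteq> A \<and> T \<subseteq> B then ph T * a A * a B else 0)"
      unfolding sum_distrib_left by (intro sum.cong[OF refl]) auto
    finally show "(\<Sum>A\<in>D. \<Sum>B\<in>D. if T \<subseteq> A \<and> T \<subseteq> B then ph T * a A * a B else 0) = ph T * u T * u T" by simp
  qed
  also have "\<dots> = (\<Sum>T\<in>D. hh T / G^2)"
  proof (rule sum.cong[OF refl])
    fix T assume T: "T \<in> D"
    have TD: "T \<in> DS z" using T unfolding D_def .
    have hp: "hh T * ph T = 1" by (rule hh_ph[OF DS_fin[OF TD] DS_primes[OF TD]])
    have "ph T * u T * u T = ph T * hh T * hh T * ((-1)^card T)^2 / G^2"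
      using uT[OF T] by (simp add: power2_eq_square field_simps)
    also have "((-1::real)^card T)^2 = 1" by (simp add: power_even_eq[symmetric] power_mult[symmetric] mult.commute)
    finally show "ph T * u T * u T = hh T / G^2" using hp by (simp add: mult.commute)
  qed
  also have "\<dots> = G / G^2" unfolding G_def D_def GG_def by (simp add: sum_divide_distrib)
  also have "\<dots> = 1 / G" using G0 by (simp add: power2_eq_square)
  finally show ?thesis unfolding D_def G_def .
qed




lemma pr_hh: assumes "finite S" "\<And>p. p \<in> S \<Longrightarrow> prime p"
  shows "real (pr S) * hh S = (\<Sum>V\<in>Pow S. hh V)"
proof -
  have "real (pr S) * hh S = (\<Prod>p\<in>S. real p * (1 / (real p - 1)))"
    unfolding pr_def hh_def of_nat_prod by (rule prod.distrib[symmetric])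
  also have "\<dots> = (\<Prod>p\<in>S. 1 / (real p - 1) + 1)"
  proof (rule prod.cong[OF refl])
    fix p assume "p \<in> S"
    then have "prime p" by (rule assms(2))
    then have "real p \<ge> 2" using prime_ge_2_nat by simp
    then show "real p * (1 / (real p - 1)) = 1 / (real p - 1) + 1" by (simp add: field_simps)
  qed
  also have "\<dots> = (\<Sum>V\<in>Pow S. (\<Prod>p\<in>V. 1 / (real p - 1)) * (\<Prod>p\<in>S - V. 1))"
    by (rule prod_add[OF assms(1)])
  also have "\<dots> = (\<Sum>V\<in>Pow S. hh V)" unfolding hh_def by simp
  finally show ?thesis .
qed

lemma lam_bound:
  assumes z: "z \<ge> 1" and S: "S \<in> DS z"
  shows "\<bar>lam z S\<bar> \<le> 1"
proof -
  define D where "D = DS z"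
  define G where "G = GG z"
  define X where "X = {R\<in>D. S \<subseteq> R}"
  have fD: "finite D" unfolding D_def by (rule finite_DS)
  have fX: "finite X" unfolding X_def using fD by simp
  have G0: "G > 0" using G_ge1[OF z] unfolding G_def by simp
  have fS: "finite S" by (rule DS_fin[OF S])
  have pS: "\<And>p. p \<in> S \<Longrightarrow> prime p" by (rule DS_primes[OF S])
  have fPS: "finite (Pow S)" using fS by simp
  have hsplit: "hh R = hh S * hh (R - S)" if R: "R \<in> X" for R
  proof -
    have "S \<subseteq> R" "R \<in> DS z" using R unfolding X_def D_def by auto
    then have "finite R" using DS_fin by blast
    then show ?thesis unfolding hh_def using prod.subset_diff[OF \<open>S \<subseteq> R\<close>] by (simp add: mult.commute)
  qed
  define f where "f = (\<lambda>(V::nat set, R::nat set). V \<union> (R - S))"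
  have hunion: "hh V * hh (R - S) = hh (f (V, R))" if "V \<in> Pow S" "R \<in> X" for V R
  proof -
    have "R \<in> DS z" using that unfolding X_def D_def by auto
    then have "finite R" using DS_fin by blast
    moreover have "finite V" using that fS finite_subset by auto
    moreover have "V \<inter> (R - S) = {}" using that by auto
    ultimately have "(\<Prod>p\<in>V \<union> (R - S). 1 / (real p - 1)) = (\<Prod>p\<in>V. 1 / (real p - 1)) * (\<Prod>p\<in>R - S. 1 / (real p - 1))"
      using finite_Diff by (intro prod.union_disjoint) auto
    then show ?thesis unfolding hh_def f_def by simp
  qed
  have inj: "inj_on f (Pow S \<times> X)"
  proof (rule inj_onI)
    fix x y assume x: "x \<in> Pow S \<times> X" and y: "y \<in> Pow S \<times> X" and e: "f x = f y"
    obtain V R where xv: "x = (V, R)" by (cases x)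
    obtain V' R' where yv: "y = (V', R')" by (cases y)
    have h: "V \<subseteq> S" "S \<subseteq> R" "V' \<subseteq> S" "S \<subseteq> R'" using x y xv yv unfolding X_def by auto
    have e': "V \<union> (R - S) = V' \<union> (R' - S)" using e xv yv unfolding f_def by simp
    have "V = (V \<union> (R - S)) \<inter> S" using h by blast
    also have "\<dots> = (V' \<union> (R' - S)) \<inter> S" using e' by simp
    also have "\<dots> = V'" using h by blast
    finally have "V = V'" .
    have "R = S \<union> ((V \<union> (R - S)) - S)" using h by blast
    also have "\<dots> = S \<union> ((V' \<union> (R' - S)) - S)" using e' by simp
    also have "\<dots> = R'" using h by blast
    finally show "x = y" using \<open>V = V'\<close> xv yv by simp
  qed
  have img: "f ` (Pow S \<times> X) \<subseteq> D"
  proof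
    fix W assume "W \<in> f ` (Pow S \<times> X)"
    then obtain V R where VR: "V \<in> Pow S" "R \<in> X" "W = f (V, R)" by auto
    then have "W \<subseteq> R" "R \<in> DS z" unfolding f_def X_def D_def by auto
    then show "W \<in> D" unfolding D_def using DS_down by blast
  qed
  have "real (pr S) * (\<Sum>R\<in>X. hh R) = (\<Sum>R\<in>X. real (pr S) * hh S * hh (R - S))"
    unfolding sum_distrib_left by (rule sum.cong[OF refl]) (simp add: hsplit mult.assoc)
  also have "\<dots> = (\<Sum>R\<in>X. \<Sum>V\<in>Pow S. hh V * hh (R - S))"
    using pr_hh[OF fS pS] by (simp add: sum_distrib_right)
  also have "\<dots> = (\<Sum>V\<in>Pow S. \<Sum>R\<in>X. hh V * hh (R - S))" by (rule sum.swap)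
  also have "\<dots> = (\<Sum>V\<in>Pow S. \<Sum>R\<in>X. hh (f (V, R)))"
    by (intro sum.cong[OF refl]) (simp add: hunion)
  also have "\<dots> = (\<Sum>x\<in>Pow S \<times> X. hh (f x))"
    by (simp add: sum.cartesian_product)
  also have "\<dots> = (\<Sum>W\<in>f ` (Pow S \<times> X). hh W)"
    by (rule sum.reindex[OF inj, symmetric, unfolded comp_def])
  also have "\<dots> \<le> (\<Sum>W\<in>D. hh W)"
    by (rule sum_mono2[OF fD img]) (auto simp: D_def intro: hh_nonneg_DS)
  finally have key: "real (pr S) * (\<Sum>R\<in>X. hh R) \<le> G" unfolding G_def GG_def D_def .
  have nn: "(\<Sum>R\<in>X. hh R) \<ge> 0"
    by (rule sum_nonneg) (auto simp: X_def D_def intro: hh_nonneg_DS)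
  have "\<bar>lam z S\<bar> = real (pr S) / G * (\<Sum>R\<in>X. hh R)"
    unfolding lam_def X_def D_def G_def using nn G0 unfolding X_def D_def G_def
    by (simp add: abs_mult)
  also have "\<dots> = real (pr S) * (\<Sum>R\<in>X. hh R) / G" by simp
  also have "\<dots> \<le> 1" using key G0 by simp
  finally show ?thesis .
qed




lemma cnt_nat:
  assumes "0 \<le> a" "a \<le> b"
  shows "\<bar>real (card {k::nat. a < real k \<and> real k \<le> b}) - (b - a)\<bar> \<le> 1"
proof -
  have set: "{k::nat. a < real k \<and> real k \<le> b} = {nat \<lfloor>a\<rfloor><..nat \<lfloor>b\<rfloor>}"
  proof (intro set_eqI iffI)
    fix k assume "k \<in> {k::nat. a < real k \<and> real k \<le> b}"
    then have "a < real k" "real k \<le> b" by auto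
    then have "\<lfloor>a\<rfloor> < int k" "int k \<le> \<lfloor>b\<rfloor>" by linarith+
    moreover have "0 \<le> \<lfloor>a\<rfloor>" "0 \<le> \<lfloor>b\<rfloor>" using assms by auto
    ultimately have "nat \<lfloor>a\<rfloor> < k" "k \<le> nat \<lfloor>b\<rfloor>" by (simp_all add: nat_less_iff le_nat_iff)
    then show "k \<in> {nat \<lfloor>a\<rfloor><..nat \<lfloor>b\<rfloor>}" by auto
  next
    fix k assume "k \<in> {nat \<lfloor>a\<rfloor><..nat \<lfloor>b\<rfloor>}"
    then have "nat \<lfloor>a\<rfloor> < k" "k \<le> nat \<lfloor>b\<rfloor>" by auto
    then have "\<lfloor>a\<rfloor> < int k" "int k \<le> \<lfloor>b\<rfloor>" using assms by linarith+
    then have "a < real k" "real k \<le> b" by linarith+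
    then show "k \<in> {k::nat. a < real k \<and> real k \<le> b}" by auto
  qed
  have fa: "\<lfloor>a\<rfloor> \<ge> 0" "\<lfloor>a\<rfloor> \<le> \<lfloor>b\<rfloor>" "\<lfloor>b\<rfloor> \<ge> 0" using assms by (auto intro: floor_mono)
  have "real (card {k::nat. a < real k \<and> real k \<le> b}) = real (nat \<lfloor>b\<rfloor> - nat \<lfloor>a\<rfloor>)"
    unfolding set by simp
  also have "\<dots> = real_of_int \<lfloor>b\<rfloor> - real_of_int \<lfloor>a\<rfloor>" using fa by (simp add: of_nat_diff of_nat_nat)
  finally have e: "real (card {k::nat. a < real k \<and> real k \<le> b}) = real_of_int \<lfloor>b\<rfloor> - real_of_int \<lfloor>a\<rfloor>" .
  have "real_of_int \<lfloor>b\<rfloor> \<le> b" "b < real_of_int \<lfloor>b\<rfloor> + 1" "real_of_int \<lfloor>a\<rfloor> \<le> a" "a < real_of_int \<lfloor>a\<rfloor> + 1"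
    by linarith+
  then show ?thesis unfolding e by linarith
qed

definition II :: "real \<Rightarrow> real \<Rightarrow> nat set" where
  "II x y = {n::nat. x < real n \<and> real n \<le> x + y}"

lemma finite_II: "finite (II x y)"
  by (rule finite_subset[of _ "{..nat \<lceil>x + y\<rceil>}"]) (auto simp: II_def, linarith)

lemma cnt_dvd:
  assumes "x \<ge> 0" "y \<ge> 0" "m > 0"
  shows "\<bar>real (card {n\<in>II x y. m dvd n}) - y / real m\<bar> \<le> 1"
proof -
  have m: "real m > 0" using assms by simp
  have inj: "inj_on (\<lambda>k. m * k) {k::nat. x / m < real k \<and> real k \<le> (x + y) / m}"
    using assms by (auto intro: inj_onI)
  have img: "(\<lambda>k. m * k) ` {k::nat. x / m < real k \<and> real k \<le> (x + y) / m} = {n\<in>II x y. m dvd n}"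
  proof (intro set_eqI iffI)
    fix n assume "n \<in> (\<lambda>k. m * k) ` {k::nat. x / m < real k \<and> real k \<le> (x + y) / m}"
    then obtain k where k: "n = m * k" "x / m < real k" "real k \<le> (x + y) / m" by auto
    then have "x < real m * real k" "real m * real k \<le> x + y" using m by (auto simp: field_simps)
    then show "n \<in> {n\<in>II x y. m dvd n}" using k(1) unfolding II_def by auto
  next
    fix n assume "n \<in> {n\<in>II x y. m dvd n}"
    then have n: "x < real n" "real n \<le> x + y" "m dvd n" unfolding II_def by auto
    obtain k where nk: "n = m * k" using n(3) by (rule dvdE)
    then have "real n = real m * real k" by simp
    then have k: "n = m * k" "x < real m * real k" "real m * real k \<le> x + y" using n nk by auto
    then have "x / m < real k" "real k \<le> (x + y) / m" using m by (auto simp: field_simps)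
    then show "n \<in> (\<lambda>k. m * k) ` {k::nat. x / m < real k \<and> real k \<le> (x + y) / m}" using k(1) by auto
  qed
  have "card {n\<in>II x y. m dvd n} = card {k::nat. x / m < real k \<and> real k \<le> (x + y) / m}"
    using card_image[OF inj] img by simp
  moreover have "\<bar>real (card {k::nat. x / m < real k \<and> real k \<le> (x + y) / m}) - ((x + y) / m - x / m)\<bar> \<le> 1"
    using assms m by (intro cnt_nat) (auto simp: divide_right_mono)
  moreover have "(x + y) / m - x / m = y / m" by (metis add_diff_cancel_left' diff_divide_distrib)
  ultimately show ?thesis by simp
qed

lemma lam_empty: assumes "z \<ge> 1" shows "lam z {} = 1"
proof -
  have "GG z > 0" using G_ge1[OF assms] by simp
  then show ?thesis unfolding lam_def GG_def pr_def by simp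
qed

definition ww :: "real \<Rightarrow> nat \<Rightarrow> real" where
  "ww z n = (\<Sum>S\<in>DS z. if pr S dvd n then lam z S else 0)"

lemma ww_prime:
  assumes z: "z \<ge> 1" and p: "prime p" "z < real p"
  shows "ww z p = 1"
proof -
  have "ww z p = (\<Sum>S\<in>DS z. if S = {} then lam z S else 0)"
    unfolding ww_def
  proof (rule sum.cong[OF refl])
    fix S assume S: "S \<in> DS z"
    show "(if pr S dvd p then lam z S else 0) = (if S = {} then lam z S else 0)"
    proof (cases "S = {}")
      case True then show ?thesis by (simp add: pr_def)
    next
      case False
      then obtain q where q: "q \<in> S" by blast
      have "prime q" using DS_primes[OF S q] .
      have "real (pr S) \<le> z" using S unfolding DS_def by simp
      have "q dvd pr S" using prime_dvd_pr[OF DS_fin[OF S] DS_primes[OF S] \<open>prime q\<close>] q by simp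
      have "pr S > 0" using pr_pos[OF DS_primes[OF S]] .
      have "q \<le> pr S" using dvd_imp_le[OF \<open>q dvd pr S\<close> \<open>pr S > 0\<close>] .
      then have "real q < real p" using \<open>real (pr S) \<le> z\<close> p(2) by linarith
      have "\<not> pr S dvd p"
      proof
        assume "pr S dvd p"
        then have "q dvd p" using \<open>q dvd pr S\<close> dvd_trans by blast
        then have "q = p" using primes_dvd_imp_eq[OF \<open>prime q\<close> p(1)] by blast
        then show False using \<open>real q < real p\<close> by simp
      qed
      then show ?thesis using False by simp
    qed
  qed
  also have "\<dots> = lam z {}" using empty_DS[OF z] finite_DS by (simp add: sum.delta')
  finally show ?thesis using lam_empty[OF z] by simp
qed




lemma pr_dvd_union:
  assumes A: "A \<in> DS z" and B: "B \<in> DS z"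
  shows "(pr A dvd n \<and> pr B dvd n) \<longleftrightarrow> pr (A \<union> B) dvd n"
proof -
  have fU: "finite (A \<union> B)" using DS_fin[OF A] DS_fin[OF B] by simp
  have pU: "\<And>p. p \<in> A \<union> B \<Longrightarrow> prime p" using DS_primes[OF A] DS_primes[OF B] by blast
  show ?thesis
    using pr_dvd_iff[OF DS_fin[OF A] DS_primes[OF A], of n] pr_dvd_iff[OF DS_fin[OF B] DS_primes[OF B], of n]
      pr_dvd_iff[OF fU pU, of n] by blast
qed

lemma sum_if_card: "finite A \<Longrightarrow> (\<Sum>n\<in>A. if P n then (c::real) else 0) = c * real (card {n\<in>A. P n})"
proof -
  assume f: "finite A"
  have "(\<Sum>n\<in>A. if P n then c else 0) = (\<Sum>n\<in>{n\<in>A. P n}. c)"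
    using sum.inter_filter[OF f, of "\<lambda>n. c" P] by simp
  then show ?thesis by simp
qed

lemma sieve_bound:
  assumes x: "x \<ge> 0" and y: "y \<ge> 0" and z: "z \<ge> 1"
  shows "real (card {p. prime p \<and> x < real p \<and> real p \<le> x + y}) \<le> z + y / GG z + z^2"
proof -
  define D where "D = DS z"
  define G where "G = GG z"
  define Pr where "Pr = {p. prime p \<and> x < real p \<and> real p \<le> x + y}"
  define Pb where "Pb = {p\<in>Pr. z < real p}"
  define c where "c A B = real (card {n\<in>II x y. pr (A \<union> B) dvd n})" for A B
  define r where "r A B = c A B - y / real (pr (A \<union> B))" for A B
  have fD: "finite D" unfolding D_def by (rule finite_DS)
  have G0: "G > 0" using G_ge1[OF z] unfolding G_def by simp
  have fII: "finite (II x y)" by (rule finite_II)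
  have PrII: "Pr \<subseteq> II x y" unfolding Pr_def II_def by auto
  have fPr: "finite Pr" using PrII fII finite_subset by blast
  have fPb: "finite Pb" unfolding Pb_def using fPr by simp
  have PbII: "Pb \<subseteq> II x y" using PrII unfolding Pb_def by auto
  have c1: "card Pr \<le> card (PS z) + card Pb"
  proof -
    have "Pr \<subseteq> PS z \<union> Pb" unfolding Pr_def Pb_def PS_def by auto
    then have "card Pr \<le> card (PS z \<union> Pb)" using finite_PS fPb by (intro card_mono) auto
    also have "\<dots> \<le> card (PS z) + card Pb" by (rule card_Un_le)
    finally show ?thesis .
  qed
  have c2: "real (card Pb) \<le> (\<Sum>n\<in>II x y. (ww z n)^2)"
  proof -
    have "real (card Pb) = (\<Sum>n\<in>Pb. (ww z n)^2)"
    proof -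
      have "(\<Sum>n\<in>Pb. (ww z n)^2) = (\<Sum>n\<in>Pb. 1)"
      proof (rule sum.cong[OF refl])
        fix n assume "n \<in> Pb"
        then have "prime n" "z < real n" unfolding Pb_def Pr_def by auto
        then show "(ww z n)^2 = 1" using ww_prime[OF z] by simp
      qed
      then show ?thesis by simp
    qed
    also have "\<dots> \<le> (\<Sum>n\<in>II x y. (ww z n)^2)"
      by (rule sum_mono2[OF fII PbII]) simp
    finally show ?thesis .
  qed
  have c3: "(\<Sum>n\<in>II x y. (ww z n)^2) = (\<Sum>A\<in>D. \<Sum>B\<in>D. lam z A * lam z B * c A B)"
  proof -
    have "(\<Sum>n\<in>II x y. (ww z n)^2)
        = (\<Sum>n\<in>II x y. \<Sum>A\<in>D. \<Sum>B\<in>D. if pr (A \<union> B) dvd n then lam z A * lam z B else 0)"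
    proof (rule sum.cong[OF refl])
      fix n assume "n \<in> II x y"
      have "(ww z n)^2 = (\<Sum>A\<in>D. \<Sum>B\<in>D. (if pr A dvd n then lam z A else 0) * (if pr B dvd n then lam z B else 0))"
        unfolding ww_def power2_eq_square sum_product D_def ..
      also have "\<dots> = (\<Sum>A\<in>D. \<Sum>B\<in>D. if pr (A \<union> B) dvd n then lam z A * lam z B else 0)"
      proof (intro sum.cong[OF refl])
        fix A B assume A: "A \<in> D" and B: "B \<in> D"
        have e: "(pr A dvd n \<and> pr B dvd n) \<longleftrightarrow> pr (A \<union> B) dvd n"
          using pr_dvd_union A B unfolding D_def by blast
        show "(if pr A dvd n then lam z A else 0) * (if pr B dvd n then lam z B else 0)
            = (if pr (A \<union> B) dvd n then lam z A * lam z B else 0)"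
          using e by auto
      qed
      finally show "(ww z n)^2 = (\<Sum>A\<in>D. \<Sum>B\<in>D. if pr (A \<union> B) dvd n then lam z A * lam z B else 0)" .
    qed
    also have "\<dots> = (\<Sum>A\<in>D. \<Sum>n\<in>II x y. \<Sum>B\<in>D. if pr (A \<union> B) dvd n then lam z A * lam z B else 0)"
      by (rule sum.swap)
    also have "\<dots> = (\<Sum>A\<in>D. \<Sum>B\<in>D. \<Sum>n\<in>II x y. if pr (A \<union> B) dvd n then lam z A * lam z B else 0)"
      by (rule sum.cong[OF refl]) (rule sum.swap)
    also have "\<dots> = (\<Sum>A\<in>D. \<Sum>B\<in>D. lam z A * lam z B * c A B)"
      unfolding c_def by (intro sum.cong[OF refl] sum_if_card[OF fII])
    finally show ?thesis .
  qed
  have c4: "(\<Sum>A\<in>D. \<Sum>B\<in>D. lam z A * lam z B * c A B)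
      = y * (\<Sum>A\<in>D. \<Sum>B\<in>D. lam z A * lam z B / real (pr (A \<union> B)))
        + (\<Sum>A\<in>D. \<Sum>B\<in>D. lam z A * lam z B * r A B)"
    unfolding sum_distrib_left sum.distrib[symmetric] r_def
    by (intro sum.cong[OF refl]) (simp add: algebra_simps)
  have c5: "(\<Sum>A\<in>D. \<Sum>B\<in>D. lam z A * lam z B * r A B) \<le> (\<Sum>A\<in>D. \<Sum>B\<in>D. 1)"
  proof (intro sum_mono)
    fix A B assume A: "A \<in> D" and B: "B \<in> D"
    have "\<And>p. p \<in> A \<union> B \<Longrightarrow> prime p" using DS_primes A B unfolding D_def by blast
    then have "pr (A \<union> B) > 0" by (rule pr_pos)
    then have "\<bar>r A B\<bar> \<le> 1" unfolding r_def c_def using cnt_dvd[OF x y] by blast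
    moreover have "\<bar>lam z A\<bar> \<le> 1" "\<bar>lam z B\<bar> \<le> 1" using lam_bound[OF z] A B unfolding D_def by blast+
    ultimately have "\<bar>lam z A * lam z B * r A B\<bar> \<le> 1 * 1 * 1"
      unfolding abs_mult by (intro mult_mono) auto
    then show "lam z A * lam z B * r A B \<le> 1" by simp
  qed
  have c6: "(\<Sum>A\<in>D. \<Sum>B\<in>D. (1::real)) \<le> z^2"
  proof -
    have "(\<Sum>A\<in>D. \<Sum>B\<in>D. (1::real)) = real (card D) ^ 2" by (simp add: power2_eq_square)
    also have "\<dots> \<le> z^2" using card_DS[of z] z unfolding D_def by (intro power_mono) auto
    finally show ?thesis .
  qed
  have Q: "(\<Sum>A\<in>D. \<Sum>B\<in>D. lam z A * lam z B / real (pr (A \<union> B))) = 1 / G"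
    using Q_identity[OF z] unfolding D_def G_def .
  have "real (card Pr) \<le> real (card (PS z)) + real (card Pb)" using c1 by linarith
  also have "\<dots> \<le> z + (y / G + z^2)"
  proof (rule add_mono)
    show "real (card (PS z)) \<le> z" using card_PS[of z] z by simp
    have "real (card Pb) \<le> y * (1 / G) + (\<Sum>A\<in>D. \<Sum>B\<in>D. lam z A * lam z B * r A B)"
      using c2 c3 c4 Q by simp
    then show "real (card Pb) \<le> y / G + z^2" using c5 c6 by simp
  qed
  finally show ?thesis unfolding Pr_def G_def by simp
qed




lemma geom_tele: "(\<Sum>k\<in>{1..N}. (q::real)^k) * (1 - q) = q - q^(Suc N)"
proof (induction N)
  case 0 then show ?case by simp
next
  case (Suc N)
  have "(\<Sum>k\<in>{1..Suc N}. q^k) = (\<Sum>k\<in>{1..N}. q^k) + q^(Suc N)" by simp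
  then have "(\<Sum>k\<in>{1..Suc N}. q^k) * (1 - q) = (\<Sum>k\<in>{1..N}. q^k) * (1 - q) + q^(Suc N) * (1 - q)"
    by (simp add: distrib_right)
  also have "\<dots> = q - q^(Suc (Suc N))" using Suc.IH by (simp add: algebra_simps)
  finally show ?case .
qed

lemma geom_bound: assumes "0 \<le> q" "q < 1" shows "(\<Sum>k\<in>{1..N}. (q::real)^k) \<le> q / (1 - q)"
proof -
  have "(\<Sum>k\<in>{1..N}. q^k) * (1 - q) \<le> q" using geom_tele[where N=N and q=q] assms by simp
  then show ?thesis using assms by (simp add: field_simps)
qed

lemma geom_p: assumes "prime p" shows "(\<Sum>k\<in>{1..N}. inverse (real p)^k) \<le> 1 / (real p - 1)"
proof -
  have p2: "real p \<ge> 2" using prime_ge_2_nat[OF assms] by simp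
  have "(\<Sum>k\<in>{1..N}. inverse (real p)^k) \<le> inverse (real p) / (1 - inverse (real p))"
    using p2 by (intro geom_bound) (auto simp: field_simps)
  also have "\<dots> = 1 / (real p - 1)" using p2 by (simp add: field_simps)
  finally show ?thesis .
qed

lemma inner_bound:
  assumes fS: "finite S" and pS: "\<And>p. p \<in> S \<Longrightarrow> prime p"
  shows "(\<Sum>n\<in>{n\<in>{1..N}. prime_factors n = S}. inverse (real n)) \<le> hh S"
proof -
  define E where "E = {n\<in>{1..N}. prime_factors n = S}"
  define g where "g n = restrict (\<lambda>p. multiplicity p n) S" for n
  have decomp: "real n = (\<Prod>p\<in>S. real p ^ g n p)" if n: "n \<in> E" for n
  proof -
    have n0: "n > 0" and pf: "prime_factors n = S" using n unfolding E_def by auto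
    have "n = (\<Prod>p\<in>prime_factors n. p ^ multiplicity p n)" using prime_factorization_nat[OF n0] .
    then have "real n = real (\<Prod>p\<in>S. p ^ multiplicity p n)" unfolding pf by (rule arg_cong)
    also have "\<dots> = (\<Prod>p\<in>S. real p ^ multiplicity p n)" by simp
    also have "\<dots> = (\<Prod>p\<in>S. real p ^ g n p)" unfolding g_def by (rule prod.cong) auto
    finally show ?thesis .
  qed
  have inj: "inj_on g E"
  proof (rule inj_onI)
    fix n m assume n: "n \<in> E" and m: "m \<in> E" and e: "g n = g m"
    have "real n = real m" using decomp[OF n] decomp[OF m] e by simp
    then show "n = m" by simp
  qed
  have img: "g ` E \<subseteq> PiE S (\<lambda>_. {1..N})"
  proof
    fix a assume "a \<in> g ` E"
    then obtain n where n: "n \<in> E" and a: "a = g n" by auto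
    have n0: "n > 0" and nN: "n \<le> N" and pf: "prime_factors n = S" using n unfolding E_def by auto
    have "multiplicity p n \<in> {1..N}" if p: "p \<in> S" for p
    proof -
      have pp: "prime p" using pS p by blast
      have "p dvd n" using p pf in_prime_factors_iff by blast
      then have m1: "multiplicity p n > 0" using prime_multiplicity_gt_zero_iff[of p n] pp n0 by simp
      have "p ^ multiplicity p n dvd n" by (rule multiplicity_dvd)
      then have "p ^ multiplicity p n \<le> n" using n0 by (rule dvd_imp_le)
      moreover have "multiplicity p n < 2 ^ multiplicity p n" by (rule less_exp)
      moreover have "2 ^ multiplicity p n \<le> p ^ multiplicity p n"
        using prime_ge_2_nat[OF pp] by (rule power_mono) simp
      ultimately have "multiplicity p n \<le> N" using nN by linarith
      then show ?thesis using m1 by simp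
    qed
    then show "a \<in> PiE S (\<lambda>_. {1..N})" unfolding a g_def restrict_PiE_iff by blast
  qed
  have fPi: "finite (PiE S (\<lambda>_. {1..N}))" using fS by (intro finite_PiE) auto
  have nn: "\<And>a. (\<Prod>p\<in>S. inverse (real p) ^ a p) \<ge> 0" by (intro prod_nonneg) simp
  have "(\<Sum>n\<in>E. inverse (real n)) = (\<Sum>n\<in>E. \<Prod>p\<in>S. inverse (real p) ^ g n p)"
  proof (rule sum.cong[OF refl])
    fix n assume n: "n \<in> E"
    have "inverse (real n) = inverse (\<Prod>p\<in>S. real p ^ g n p)" using decomp[OF n] by simp
    also have "\<dots> = (\<Prod>p\<in>S. inverse (real p ^ g n p))"
      using prod_inversef[of "\<lambda>p. real p ^ g n p" S] unfolding comp_def by simp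
    also have "\<dots> = (\<Prod>p\<in>S. inverse (real p) ^ g n p)" by (simp add: power_inverse)
    finally show "inverse (real n) = (\<Prod>p\<in>S. inverse (real p) ^ g n p)" .
  qed
  also have "\<dots> = (\<Sum>a\<in>g ` E. \<Prod>p\<in>S. inverse (real p) ^ a p)"
    using sum.reindex[OF inj, of "\<lambda>a. \<Prod>p\<in>S. inverse (real p) ^ a p"] by simp
  also have "\<dots> \<le> (\<Sum>a\<in>PiE S (\<lambda>_. {1..N}). \<Prod>p\<in>S. inverse (real p) ^ a p)"
    by (rule sum_mono2[OF fPi img]) (rule nn)
  also have "\<dots> = (\<Prod>p\<in>S. \<Sum>k\<in>{1..N}. inverse (real p) ^ k)"
    by (rule prod_sum_PiE[symmetric]) (auto simp: fS)
  also have "\<dots> \<le> (\<Prod>p\<in>S. 1 / (real p - 1))"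
  proof (rule prod_mono)
    fix p assume "p \<in> S"
    then have "prime p" by (rule pS)
    then show "0 \<le> (\<Sum>k\<in>{1..N}. inverse (real p) ^ k) \<and> (\<Sum>k\<in>{1..N}. inverse (real p) ^ k) \<le> 1 / (real p - 1)"
      using geom_p by (auto intro: sum_nonneg)
  qed
  finally show ?thesis unfolding E_def hh_def .
qed




lemma G_lower:
  assumes z: "z \<ge> 1"
  shows "ln z \<le> GG z"
proof -
  define N where "N = nat \<lfloor>z\<rfloor>"
  have zN: "z < real N + 1" "real N \<le> z" unfolding N_def using z by linarith+
  have "ln z \<le> ln (real N + 1)" using z zN by simp
  also have "\<dots> \<le> harm N" by (rule ln_le_harm)
  also have "harm N = (\<Sum>n\<in>{1..N}. inverse (real n))" unfolding harm_def by simp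
  also have "\<dots> = (\<Sum>S\<in>DS z. \<Sum>n\<in>{n\<in>{1..N}. prime_factors n = S}. inverse (real n))"
  proof (rule sum.group[symmetric])
    show "finite {1..N}" by simp
    show "finite (DS z)" by (rule finite_DS)
    show "prime_factors ` {1..N} \<subseteq> DS z"
    proof
      fix S assume "S \<in> prime_factors ` {1..N}"
      then obtain n where n: "n \<in> {1..N}" and S: "S = prime_factors n" by auto
      have n0: "n > 0" and nz: "real n \<le> z" using n zN by auto
      have fS: "finite S" unfolding S by simp
      have pS: "\<And>p. p \<in> S \<Longrightarrow> prime p" unfolding S using in_prime_factors_iff by blast
      have dS: "\<forall>p\<in>S. p dvd n" unfolding S using in_prime_factors_iff by blast
      have "pr S dvd n" using pr_dvd_iff[OF fS pS, of n] dS by blast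
      then have "pr S \<le> n" using n0 by (rule dvd_imp_le)
      then have prz: "real (pr S) \<le> z" using nz by linarith
      have "S \<subseteq> PS z"
      proof
        fix p assume p: "p \<in> S"
        have "p dvd n" using dS p by blast
        then have "p \<le> n" using n0 by (rule dvd_imp_le)
        then show "p \<in> PS z" unfolding PS_def using pS[OF p] nz by simp
      qed
      then show "S \<in> DS z" unfolding DS_def using prz by simp
    qed
  qed
  also have "\<dots> \<le> (\<Sum>S\<in>DS z. hh S)"
    by (rule sum_mono) (rule inner_bound[OF DS_fin DS_primes])
  finally show ?thesis unfolding GG_def .
qed




lemma primepi_PS: "primepi t = card (PS t)"
  unfolding primepi_def PS_def by simp

lemma primepi_diff:
  assumes y: "y \<ge> 0"
  shows "real (primepi (x + y)) - real (primepi x) = real (card {p. prime p \<and> x < real p \<and> real p \<le> x + y})"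
proof -
  define Pr where "Pr = {p. prime p \<and> x < real p \<and> real p \<le> x + y}"
  have u: "PS (x + y) = PS x \<union> Pr" unfolding PS_def Pr_def using y by auto
  have d: "PS x \<inter> Pr = {}" unfolding PS_def Pr_def by auto
  have fPr: "finite Pr" using finite_PS[of "x + y"] u by simp
  have "card (PS (x + y)) = card (PS x) + card Pr"
    unfolding u by (rule card_Un_disjoint[OF finite_PS fPr d])
  then show ?thesis unfolding primepi_PS Pr_def by simp
qed

lemma trivial_bound:
  assumes x: "x \<ge> 0" and y: "y \<ge> 0"
  shows "real (card {p. prime p \<and> x < real p \<and> real p \<le> x + y}) \<le> y + 1"
proof -
  have "{p. prime p \<and> x < real p \<and> real p \<le> x + y} \<subseteq> {n\<in>II x y. 1 dvd n}" unfolding II_def by auto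
  then have "card {p. prime p \<and> x < real p \<and> real p \<le> x + y} \<le> card {n\<in>II x y. 1 dvd n}"
    using finite_II by (intro card_mono) auto
  moreover have "\<bar>real (card {n\<in>II x y. 1 dvd n}) - y / real (1::nat)\<bar> \<le> 1"
    using cnt_dvd[OF x y, of 1] by simp
  ultimately show ?thesis by simp
qed

lemma large_bound:
  assumes x: "x \<ge> 0" and y: "y \<ge> 0" and z: "z \<ge> 1" and lz: "ln z > 0"
  shows "real (card {p. prime p \<and> x < real p \<and> real p \<le> x + y}) \<le> z + y / ln z + z^2"
proof -
  have "y / GG z \<le> y / ln z"
    using G_lower[OF z] lz y by (intro divide_left_mono) auto
  then show ?thesis using sieve_bound[OF x y z] by linarith
qed

lemma ev1a: "eventually (\<lambda>y::real. 1 \<le> sqrt y / ln y) at_top"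
  by real_asymp
lemma ev1b: "eventually (\<lambda>y::real. 0 < ln (sqrt y / ln y)) at_top"
  by real_asymp
lemma ev2: "eventually (\<lambda>y::real. sqrt y / ln y + y / ln (sqrt y / ln y) + (sqrt y / ln y)^2
   \<le> 2 * y / ln y + 10 * y * ln (ln y) / (ln y)^2) at_top"
  by real_asymp

lemma ln3a: "1 < ln (3::real)"
proof -
  have "exp 1 < (3::real)" using e_less_272 by simp
  then have "ln (exp 1) < ln (3::real)" using ln_less_cancel_iff[of "exp 1" 3] by simp
  then show ?thesis by simp
qed

lemma ln3: "ln (ln (3::real)) > 0"
  using ln3a by simp

theorem mainTheorem9:
  shows "\<exists>C :: real. \<forall>x y :: real. x \<ge> 2 \<longrightarrow> y \<ge> 3 \<longrightarrow>
    real (primepi (x + y)) - real (primepi x)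
      \<le> 2 * y / ln y + C * y * ln (ln y) / (ln y)\<^sup>2"
proof -
  have "eventually (\<lambda>y::real. (1 \<le> sqrt y / ln y \<and> 0 < ln (sqrt y / ln y)) \<and>
      sqrt y / ln y + y / ln (sqrt y / ln y) + (sqrt y / ln y)^2
   \<le> 2 * y / ln y + 10 * y * ln (ln y) / (ln y)^2) at_top"
    using ev1a ev1b ev2 by (intro eventually_conj)
  then obtain Y0 where Y0: "\<And>y. y \<ge> Y0 \<Longrightarrow> (1 \<le> sqrt y / ln y \<and> 0 < ln (sqrt y / ln y)) \<and>
      sqrt y / ln y + y / ln (sqrt y / ln y) + (sqrt y / ln y)^2
   \<le> 2 * y / ln y + 10 * y * ln (ln y) / (ln y)^2"
    unfolding eventually_at_top_linorder by blast
  define Y where "Y = max Y0 3"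
  define K where "K = 2 * (ln Y)^2 / ln (ln 3)"
  define C where "C = max 10 K"
  show ?thesis
  proof (intro exI allI impI)
    fix x y :: real assume x: "x \<ge> 2" and y: "y \<ge> 3"
    define L where "L = ln y"
    have "ln 3 \<le> L" unfolding L_def using y by simp
    then have L1: "L > 1" using ln3a by linarith
    have lnL: "ln L \<ge> ln (ln 3)" unfolding L_def using y by simp
    have lnL0: "ln L > 0" using lnL ln3 by linarith
    have base: "0 \<le> y * ln L / L^2" using y lnL0 by simp
    have diff: "real (primepi (x + y)) - real (primepi x) = real (card {p. prime p \<and> x < real p \<and> real p \<le> x + y})"
      using primepi_diff y by simp
    have t2: "0 \<le> 2 * y / L" using y L1 by simp
    show "real (primepi (x + y)) - real (primepi x) \<le> 2 * y / ln y + C * y * ln (ln y) / (ln y)\<^sup>2"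
    proof (cases "y \<ge> Y0")
      case True
      note h = Y0[OF True]
      have h1: "1 \<le> sqrt y / ln y" using h by blast
      have h2: "0 < ln (sqrt y / ln y)" using h by blast
      have h3: "sqrt y / ln y + y / ln (sqrt y / ln y) + (sqrt y / ln y)^2
         \<le> 2 * y / ln y + 10 * y * ln (ln y) / (ln y)^2" using h by blast
      have x0: "x \<ge> 0" and y0: "y \<ge> 0" using x y by auto
      have "real (card {p. prime p \<and> x < real p \<and> real p \<le> x + y}) \<le> sqrt y / ln y + y / ln (sqrt y / ln y) + (sqrt y / ln y)^2"
        by (rule large_bound[OF x0 y0 h1 h2])
      also have "\<dots> \<le> 2 * y / L + 10 * (y * ln L / L^2)" using h3 unfolding L_def by simp
      also have "10 * (y * ln L / L^2) \<le> C * (y * ln L / L^2)"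
        unfolding C_def using base by (intro mult_right_mono) auto
      finally show ?thesis unfolding diff L_def by simp
    next
      case False
      then have yY: "y \<le> Y" unfolding Y_def by simp
      have "L \<le> ln Y" unfolding L_def using yY y by simp
      then have "L^2 \<le> (ln Y)^2" using L1 by (intro power_mono) auto
      have K0: "K \<ge> 0" unfolding K_def using ln3 by simp
      have "2 * L^2 \<le> 2 * (ln Y)^2" using \<open>L^2 \<le> (ln Y)^2\<close> by simp
      also have "\<dots> = K * ln (ln 3)" unfolding K_def using ln3 by simp
      also have "\<dots> \<le> K * ln L" using lnL K0 by (intro mult_left_mono) auto
      finally have kl: "2 * L^2 \<le> K * ln L" .
      have "2 * y \<le> K * (y * ln L / L^2)"
      proof -
        have "(2 * L^2) * y \<le> (K * ln L) * y" using kl y by (intro mult_right_mono) auto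
        then have "2 * y * L^2 \<le> K * ln L * y" by (simp add: mult_ac)
        then show ?thesis using L1 by (simp add: field_simps)
      qed
      also have "\<dots> \<le> C * (y * ln L / L^2)" unfolding C_def using base by (intro mult_right_mono) auto
      finally have c: "2 * y \<le> C * (y * ln L / L^2)" .
      have "real (card {p. prime p \<and> x < real p \<and> real p \<le> x + y}) \<le> y + 1"
        using x y by (intro trivial_bound) auto
      also have "\<dots> \<le> 2 * y" using y by simp
      also have "\<dots> \<le> 2 * y / L + C * (y * ln L / L^2)" using c t2 by simp
      finally show ?thesis unfolding diff L_def by simp
    qed
  qed
qed


end
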